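(* If $f_0, f_1, \dots : X \to \mathbb{R}$ are limsup functions converging uniformly to $f : X \to \mathbb{R}$, then $f$ is a limsup function.
   Context: Let $A$ be a non-empty countable set and $T$ a pruned tree on $A$ (a set of finite sequences of elements of $A$, closed under initial segments, in which every sequence has a proper extension in $T$). Let $X$ be the set of infinite branches of $T$, with the topology generated by the cylinder sets $O(s) = \{x \in X : s \text{ is an initial segment of } x\}$, $s \in T$. A function $f : X \to \mathbb{R}$ is a limsup function if there exists $u : T \to \mathbb{R}$ with $f(x) = \limsup_{t\to\infty} u(x_0,\dots,x_t)$ for every $x \in X$. *)

theory Defs
  imports "HOL-Analysis.Analysis"
begin

text \<open>Finite sequences are lists; an infinite sequence is a function nat => 'a.
  The initial segment (x_0,...,x_{n-1}) of x is map x [0..<n].\<close>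

definition pruned_tree :: "'a set \<Rightarrow> 'a list set \<Rightarrow> bool" where
  "pruned_tree A T \<longleftrightarrow>
     (\<forall>s\<in>T. set s \<subseteq> A) \<and>
     (\<forall>s\<in>T. \<forall>n. take n s \<in> T) \<and>
     (\<forall>s\<in>T. \<exists>t\<in>T. length s < length t \<and> take (length s) t = s)"

definition branches :: "'a list set \<Rightarrow> (nat \<Rightarrow> 'a) set" where
  "branches T = {x. \<forall>n. map x [0..<n] \<in> T}"

definition is_limsup_function :: "'a list set \<Rightarrow> ((nat \<Rightarrow> 'a) \<Rightarrow> real) \<Rightarrow> bool" where
  "is_limsup_function T f \<longleftrightarrow>
     (\<exists>u :: 'a list \<Rightarrow> real. \<forall>x\<in>branches T.
        limsup (\<lambda>t. ereal (u (map x [0..<Suc t]))) = ereal (f x))"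

end

theory Submission
  imports Defs
begin

primrec proc :: "(nat \<Rightarrow> nat \<Rightarrow> bool) \<Rightarrow> nat \<Rightarrow> nat" where
  "proc Q 0 = 0"
| "proc Q (Suc n) = (if Q (fst (prod_decode (proc Q n))) n then Suc (proc Q n) else proc Q n)"

lemma proc_step: "proc Q n \<le> proc Q (Suc n)" "proc Q (Suc n) \<le> Suc (proc Q n)"
  by auto

lemma proc_mono: "m \<le> n \<Longrightarrow> proc Q m \<le> proc Q n"
  by (induction n rule: dec_induct) (auto intro: order_trans[OF _ proc_step(1)])

lemma proc_cong: "(\<And>k m. m < n \<Longrightarrow> Q k m = Q' k m) \<Longrightarrow> proc Q n = proc Q' n"
  by (induction n) auto

lemma proc_cmp: "(\<And>k m. Q k m \<Longrightarrow> Q' k m) \<Longrightarrow> proc Q n \<le> proc Q' n"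
proof (induction n)
  case 0 then show ?case by simp
next
  case (Suc n)
  show ?case
  proof (cases "proc Q n < proc Q' n")
    case True
    then show ?thesis using proc_step[of Q n] proc_step[of Q' n] by linarith
  next
    case False
    then have "proc Q n = proc Q' n" using Suc by simp
    then show ?thesis using Suc.prems by auto
  qed
qed

lemma proc_unbounded:
  assumes "\<And>k. \<exists>\<^sub>F n in sequentially. Q k n"
  shows "\<exists>n. B \<le> proc Q n"
proof (rule ccontr)
  assume "\<not> ?thesis"
  then have bd: "\<And>n. proc Q n < B" by (simp add: not_le)
  have "\<exists>N. \<forall>n\<ge>N. proc Q n = proc Q N"
  proof (rule ccontr)
    assume "\<not> ?thesis"
    have h: "\<exists>n\<ge>N. proc Q N < proc Q n" for N
    proof -
      from \<open>\<not> (\<exists>N. \<forall>n\<ge>N. proc Q n = proc Q N)\<close> obtain n where n: "n \<ge> N" "proc Q n \<noteq> proc Q N" by blast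
      with proc_mono[of N n Q] have "proc Q N < proc Q n" by simp
      with n show ?thesis by blast
    qed
    have "\<And>j. \<exists>n. j \<le> proc Q n"
    proof -
      fix j show "\<exists>n. j \<le> proc Q n"
      proof (induction j)
        case 0 then show ?case by simp
      next
        case (Suc j)
        then obtain n where "j \<le> proc Q n" by blast
        from h[of n] obtain m where "proc Q n < proc Q m" by blast
        with \<open>j \<le> proc Q n\<close> have "Suc j \<le> proc Q m" by simp
        then show ?case by blast
      qed
    qed
    then obtain n where "B \<le> proc Q n" by blast
    with bd[of n] show False by simp
  qed
  then obtain N where N: "\<And>n. n \<ge> N \<Longrightarrow> proc Q n = proc Q N" by blast
  let ?k = "fst (prod_decode (proc Q N))"
  have "\<forall>\<^sub>F n in sequentially. \<not> Q ?k n"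
    unfolding eventually_sequentially
  proof (intro exI allI impI)
    fix n assume "N \<le> n"
    have e1: "proc Q n = proc Q N" using N[of n] \<open>N \<le> n\<close> by blast
    have e2: "proc Q (Suc n) = proc Q N" using N[of "Suc n"] \<open>N \<le> n\<close> by simp
    have "proc Q (Suc n) = proc Q n" "proc Q n = proc Q N" using e1 e2 by simp_all
    then show "\<not> Q ?k n" by (auto split: if_splits)
  qed
  then show False using assms[of ?k] by (simp add: frequently_def)
qed

lemma proc_bounded:
  assumes "\<forall>\<^sub>F n in sequentially. \<not> Q k n"
  shows "\<exists>B. \<forall>n. proc Q n \<le> B"
proof -
  obtain T where T: "\<And>n. n \<ge> T \<Longrightarrow> \<not> Q k n" using assms by (auto simp: eventually_sequentially)
  define p where "p = prod_encode (k, proc Q T)"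
  have p1: "proc Q T \<le> p" unfolding p_def by (rule le_prod_encode_2)
  have p2: "fst (prod_decode p) = k" unfolding p_def by simp
  have "proc Q n \<le> p" if "T \<le> n" for n
    using that
  proof (induction n rule: dec_induct)
    case base then show ?case using p1 .
  next
    case (step n)
    show ?case
    proof (cases "proc Q n < p")
      case True then show ?thesis using proc_step[of Q n] by linarith
    next
      case False
      then have "proc Q n = p" using step by simp
      then show ?thesis using T[of n] step p2 by simp
    qed
  qed
  then have "\<forall>n. proc Q n \<le> p"
    by (metis nle_le order_trans proc_mono)
  then show ?thesis by blast
qed

definition ee :: "nat \<Rightarrow> real" where "ee k = 1 / real (Suc k)"

definition rr :: "nat \<Rightarrow> real" where "rr i = real_of_rat (from_nat i)"

definition Qs :: "(nat \<Rightarrow> 'a list \<Rightarrow> real) \<Rightarrow> real \<Rightarrow> 'a list \<Rightarrow> nat \<Rightarrow> nat \<Rightarrow> bool" where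
  "Qs v q s k m \<longleftrightarrow> q - ee k < v k (take (Suc m) s)"

definition cnt :: "(nat \<Rightarrow> 'a list \<Rightarrow> real) \<Rightarrow> real \<Rightarrow> 'a list \<Rightarrow> nat" where
  "cnt v q s = proc (Qs v q s) (length s)"

definition fire :: "(nat \<Rightarrow> 'a list \<Rightarrow> real) \<Rightarrow> nat \<Rightarrow> 'a list \<Rightarrow> bool" where
  "fire v i s \<longleftrightarrow> i \<le> length s \<and> i \<le> cnt v (rr i) s \<and> cnt v (rr i) (butlast s) < cnt v (rr i) s"

definition UU :: "(nat \<Rightarrow> 'a list \<Rightarrow> real) \<Rightarrow> 'a list \<Rightarrow> real" where
  "UU v s = (if \<exists>i. fire v i s then Max (rr ` {i. fire v i s}) else - real (length s))"

definition Qx :: "(nat \<Rightarrow> 'a list \<Rightarrow> real) \<Rightarrow> real \<Rightarrow> (nat \<Rightarrow> 'a) \<Rightarrow> nat \<Rightarrow> nat \<Rightarrow> bool" where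
  "Qx v q x k m \<longleftrightarrow> q - ee k < v k (map x [0..<Suc m])"

lemma cnt_map: "cnt v q (map x [0..<N]) = proc (Qx v q x) N"
  unfolding cnt_def length_map length_upt diff_zero
  by (rule proc_cong) (auto simp: Qs_def Qx_def take_map)

lemma fire_map: "fire v i (map x [0..<Suc t]) \<longleftrightarrow>
   i \<le> Suc t \<and> i \<le> proc (Qx v (rr i) x) (Suc t) \<and> proc (Qx v (rr i) x) t < proc (Qx v (rr i) x) (Suc t)"
proof -
  have "butlast (map x [0..<Suc t]) = map x [0..<t]" by (simp add: map_butlast[symmetric])
  then show ?thesis unfolding fire_def by (simp only: cnt_map length_map length_upt diff_zero)
qed

lemma incseq_bounded_const:
  fixes h :: "nat \<Rightarrow> nat"
  assumes "\<And>m n. m \<le> n \<Longrightarrow> h m \<le> h n" and "\<And>n. h n \<le> B"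
  shows "\<forall>\<^sub>F t in sequentially. \<not> h t < h (Suc t)"
proof -
  have fin: "finite (range h)" using assms(2) by (meson finite_atMost finite_subset image_subsetI atMost_iff)
  then have "Max (range h) \<in> range h" by (intro Max_in) auto
  then obtain N where N: "h N = Max (range h)" by auto
  have "\<not> h t < h (Suc t)" if "t \<ge> N" for t
  proof -
    have "h (Suc t) \<le> h N" using N fin by simp
    moreover have "h N \<le> h t" using assms(1) that by simp
    ultimately show ?thesis by simp
  qed
  then show ?thesis by (auto simp: eventually_sequentially)
qed

lemma main_lemma:
  fixes v :: "nat \<Rightarrow> 'a list \<Rightarrow> real" and g :: "nat \<Rightarrow> (nat \<Rightarrow> 'a) \<Rightarrow> real"
  assumes lim: "\<And>k. limsup (\<lambda>t. ereal (v k (map x [0..<Suc t]))) = ereal (g k x)"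
    and close: "\<And>k. \<bar>g k x - f x\<bar> < ee k"
  shows "limsup (\<lambda>t. ereal (UU v (map x [0..<Suc t]))) = ereal (f x)"
proof -
  define D where "D q = proc (Qx v q x)" for q
  have Dmono: "\<And>q m n. m \<le> n \<Longrightarrow> D q m \<le> D q n" unfolding D_def by (rule proc_mono)
  have fr: "\<exists>\<^sub>F t in sequentially. c < v k (map x [0..<Suc t])" if "c < g k x" for k c
  proof (rule ccontr)
    assume "\<not> ?thesis"
    then have "\<forall>\<^sub>F t in sequentially. ereal (v k (map x [0..<Suc t])) \<le> ereal c"
      by (simp add: not_frequently not_less)
    then have "limsup (\<lambda>t. ereal (v k (map x [0..<Suc t]))) \<le> ereal c" by (rule Limsup_bounded)
    then show False using lim[of k] that by simp
  qed
  have ev: "\<forall>\<^sub>F t in sequentially. v k (map x [0..<Suc t]) < c" if "g k x < c" for k c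
  proof -
    have "limsup (\<lambda>t. ereal (v k (map x [0..<Suc t]))) < ereal c" using lim[of k] that by simp
    from Limsup_lessD[OF this] show ?thesis by simp
  qed
  have A: "\<exists>n. B \<le> D q n" if "q < f x" for q B
    unfolding D_def
  proof (rule proc_unbounded)
    fix k
    have "q - ee k < g k x" using close[of k] that by linarith
    from fr[OF this] show "\<exists>\<^sub>F n in sequentially. Qx v q x k n" by (simp add: Qx_def)
  qed
  have Bd: "\<exists>B. \<forall>n. D q n \<le> B" if "f x + 2 * ee k \<le> q" for q k
    unfolding D_def
  proof (rule proc_bounded)
    have "g k x < q - ee k" using close[of k] that by linarith
    from ev[OF this] show "\<forall>\<^sub>F n in sequentially. \<not> Qx v q x k n"
      by (rule eventually_mono) (simp add: Qx_def)
  qed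
  have cmp: "D q n \<le> D q' n" if "q' \<le> q" for q q' n
    unfolding D_def by (rule proc_cmp) (use that in \<open>auto simp: Qx_def\<close>)
  have firefin: "finite {i. fire v i s}" for s
    by (rule finite_subset[of _ "{..length s}"]) (auto simp: fire_def)
  have fire': "fire v i (map x [0..<Suc t]) \<longleftrightarrow>
     i \<le> Suc t \<and> i \<le> D (rr i) (Suc t) \<and> D (rr i) t < D (rr i) (Suc t)" for i t
    unfolding D_def by (rule fire_map)
  let ?L = "limsup (\<lambda>t. ereal (UU v (map x [0..<Suc t])))"
  have up: "?L \<le> ereal (f x + \<epsilon>)" if "\<epsilon> > 0" for \<epsilon>
  proof -
    have "\<epsilon> / 2 > 0" using that by simp
    then obtain k where k: "inverse (real (Suc k)) < \<epsilon> / 2" using reals_Archimedean by blast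
    define q0 where "q0 = f x + \<epsilon>"
    have "f x + 2 * ee k \<le> q0" using k unfolding q0_def ee_def by (simp add: field_simps)
    from Bd[OF this] obtain B where B: "\<And>n. D q0 n \<le> B" by blast
    define I where "I = {i. i \<le> B \<and> q0 \<le> rr i}"
    have "finite I" unfolding I_def by simp
    moreover have "\<forall>i\<in>I. \<forall>\<^sub>F t in sequentially. \<not> D (rr i) t < D (rr i) (Suc t)"
    proof
      fix i assume "i \<in> I"
      then have "q0 \<le> rr i" by (simp add: I_def)
      show "\<forall>\<^sub>F t in sequentially. \<not> D (rr i) t < D (rr i) (Suc t)"
        by (rule incseq_bounded_const[where B=B]) (use Dmono B cmp[OF \<open>q0 \<le> rr i\<close>] order_trans in blast)+
    qed
    ultimately have e1: "\<forall>\<^sub>F t in sequentially. \<forall>i\<in>I. \<not> D (rr i) t < D (rr i) (Suc t)"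
      by (rule eventually_ball_finite)
    obtain N0 :: nat where "- q0 \<le> real N0" using reals_Archimedean2[of "- q0"] by (auto intro: less_imp_le)
    then have e2: "\<forall>\<^sub>F t in sequentially. - real (Suc t) \<le> q0"
      unfolding eventually_sequentially by (intro exI[of _ N0]) auto
    have "\<forall>\<^sub>F t in sequentially. ereal (UU v (map x [0..<Suc t])) \<le> ereal q0"
      using e1 e2
    proof eventually_elim
      case (elim t)
      let ?s = "map x [0..<Suc t]"
      have lt: "rr i < q0" if "fire v i ?s" for i
      proof (rule ccontr)
        assume "\<not> rr i < q0"
        then have q: "q0 \<le> rr i" by simp
        from that have f: "i \<le> D (rr i) (Suc t)" "D (rr i) t < D (rr i) (Suc t)" unfolding fire' by auto
        have "i \<le> B" using f(1) cmp[OF q, of "Suc t"] B[of "Suc t"] by linarith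
        then have "i \<in> I" using q by (simp add: I_def)
        then show False using elim(1) f(2) by blast
      qed
      show ?case
      proof (cases "\<exists>i. fire v i ?s")
        case True
        then have "Max (rr ` {i. fire v i ?s}) \<le> q0"
          using firefin[of ?s] lt by (subst Max_le_iff) (auto intro: less_imp_le)
        then show ?thesis using True by (simp add: UU_def)
      next
        case False
        then show ?thesis using elim(2) by (simp add: UU_def)
      qed
    qed
    then have "?L \<le> ereal q0" by (rule Limsup_bounded)
    then show ?thesis by (simp add: q0_def)
  qed
  have le: "?L \<le> ereal (f x)"
  proof (rule ccontr)
    assume "\<not> ?thesis"
    then have "ereal (f x) < ?L" by simp
    then obtain w where w: "ereal (f x) < w" "w < ?L" using dense by blast
    then obtain z where z: "w = ereal z" by (cases w) auto
    then have "f x < z" using w by simp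
    then have "?L \<le> ereal (f x + (z - f x))" by (intro up) simp
    then show False using w z by simp
  qed
  have lo: "ereal y \<le> ?L" if y: "y < f x" for y
  proof -
    obtain r where r: "r \<in> \<rat>" "y < r" "r < f x" using Rats_dense_in_real[OF y] by blast
    from r(1) obtain q where q: "r = real_of_rat q" by (cases rule: Rats_cases) auto
    define i where "i = to_nat q"
    have ri: "rr i = r" unfolding rr_def i_def q by simp
    have unb: "\<exists>n. B \<le> D r n" for B using A[OF r(3)] .
    have "\<exists>\<^sub>F t in sequentially. fire v i (map x [0..<Suc t])"
      unfolding frequently_sequentially
    proof
      fix N
      obtain N'' where N'': "i \<le> D r N''" using unb by blast
      define N' where "N' = max N (max i N'')"
      obtain n where n: "Suc (D r N') \<le> D r n" using unb by blast
      have "\<exists>t\<ge>N'. D r t < D r (Suc t)"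
      proof (rule ccontr)
        assume "\<not> ?thesis"
        then have h: "\<And>t. t \<ge> N' \<Longrightarrow> D r (Suc t) \<le> D r t" by (auto simp: not_less)
        have c: "D r t = D r N'" if "t \<ge> N'" for t
          using that
        proof (induction t rule: dec_induct)
          case base then show ?case by simp
        next
          case (step t) then show ?case using h[of t] Dmono[of t "Suc t" r] by simp
        qed
        show False
        proof (cases "n \<ge> N'")
          case True then show False using c[OF True] n by simp
        next
          case False then show False using Dmono[of n N' r] n by simp
        qed
      qed
      then obtain t where t: "t \<ge> N'" "D r t < D r (Suc t)" by blast
      have "i \<le> D r (Suc t)" using N'' Dmono[of N'' "Suc t" r] t(1) unfolding N'_def by simp
      then have "fire v i (map x [0..<Suc t])" unfolding fire' ri using t unfolding N'_def by simp
      moreover have "t \<ge> N" using t(1) unfolding N'_def by simp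
      ultimately show "\<exists>t\<ge>N. fire v i (map x [0..<Suc t])" by blast
    qed
    then have fq: "\<exists>\<^sub>F t in sequentially. ereal r \<le> ereal (UU v (map x [0..<Suc t]))"
    proof (rule frequently_elim1)
      fix t assume fi: "fire v i (map x [0..<Suc t])"
      then have "rr i \<le> Max (rr ` {j. fire v j (map x [0..<Suc t])})"
        using firefin by (intro Max_ge) auto
      moreover have "\<exists>j. fire v j (map x [0..<Suc t])" using fi by blast
      then have "UU v (map x [0..<Suc t]) = Max (rr ` {j. fire v j (map x [0..<Suc t])})"
        unfolding UU_def by (rule if_P)
      ultimately show "ereal r \<le> ereal (UU v (map x [0..<Suc t]))" using ri by simp
    qed
    have "ereal r \<le> ?L"
    proof (rule ccontr)
      assume "\<not> ?thesis"
      then have "?L < ereal r" by simp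
      from Limsup_lessD[OF this] have "\<forall>\<^sub>F t in sequentially. ereal (UU v (map x [0..<Suc t])) < ereal r" .
      then have "\<not> (\<exists>\<^sub>F t in sequentially. ereal r \<le> ereal (UU v (map x [0..<Suc t])))"
        by (simp add: not_frequently not_le)
      then show False using fq by simp
    qed
    moreover have "ereal y \<le> ereal r" using r(2) by simp
    ultimately show ?thesis by (rule order.trans[rotated])
  qed
  have ge: "ereal (f x) \<le> ?L"
  proof (rule dense_le)
    fix w assume w: "w < ereal (f x)"
    show "w \<le> ?L"
    proof (cases w)
      case (real z)
      then have "z < f x" using w by simp
      then show ?thesis using lo[of z] real by simp
    next
      case PInf then show ?thesis using w by simp
    next
      case MInf then show ?thesis by simp
    qed
  qed
  show ?thesis using le ge by simp
qed

theorem mainTheorem4: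
  fixes A :: "'a set" and T :: "'a list set"
    and fs :: "nat \<Rightarrow> (nat \<Rightarrow> 'a) \<Rightarrow> real" and f :: "(nat \<Rightarrow> 'a) \<Rightarrow> real"
  assumes "countable A" and "A \<noteq> {}" and "pruned_tree A T"
    and "\<And>n. is_limsup_function T (fs n)"
    and "uniform_limit (branches T) fs f sequentially"
  shows "is_limsup_function T f"
proof -
  have "\<exists>n. \<forall>x\<in>branches T. \<bar>fs n x - f x\<bar> < ee k" for k
  proof -
    have "ee k > 0" by (simp add: ee_def)
    with assms(5) have "\<forall>\<^sub>F n in sequentially. \<forall>x\<in>branches T. dist (fs n x) (f x) < ee k"
      unfolding uniform_limit_iff by blast
    then obtain N where "\<forall>x\<in>branches T. dist (fs N x) (f x) < ee k"
      unfolding eventually_sequentially by blast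
    then show ?thesis by (auto simp: dist_real_def)
  qed
  then obtain nn where nn: "\<And>k x. x \<in> branches T \<Longrightarrow> \<bar>fs (nn k) x - f x\<bar> < ee k" by metis
  have "\<exists>w. \<forall>x\<in>branches T. limsup (\<lambda>t. ereal (w (map x [0..<Suc t]))) = ereal (fs (nn k) x)" for k
    using assms(4)[of "nn k"] by (simp add: is_limsup_function_def)
  then obtain v where v: "\<And>k x. x \<in> branches T \<Longrightarrow>
      limsup (\<lambda>t. ereal (v k (map x [0..<Suc t]))) = ereal (fs (nn k) x)" by metis
  show ?thesis unfolding is_limsup_function_def
  proof (intro exI[of _ "UU v"] ballI)
    fix x assume x: "x \<in> branches T"
    show "limsup (\<lambda>t. ereal (UU v (map x [0..<Suc t]))) = ereal (f x)"
      by (rule main_lemma[where g = "\<lambda>k. fs (nn k)" and v = v and x = x and f = f, OF v[OF x] nn[OF x]])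
  qed
qed

end
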